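(* Let $n\geq3$, let $S_n=K_{1,n-1}$ be the star with centre $v$, and let $c_0$ be a finite chip configuration on $S_n$ with resulting configurations $(c_t)_{t\ge0}$. Let $\ell_M$ be a leaf whose value $c_0(\ell_M)$ is maximum among leaves and $\ell_m$ a leaf whose value $c_0(\ell_m)$ is minimum among leaves, and let $d_t=\max_{x,y\in V(S_n)\setminus\{v\}}|c_t(x)-c_t(y)|$. Then: 1. For all $t\geq0$, $d_t=c_t(\ell_M)-c_t(\ell_m)$. 2. If $c_t(\ell_m)\leq c_t(v)\leq c_t(\ell_M)$ and at least one of these inequalities is strict, then $d_{t+1}<d_t$. 3. If $c_t(v)<c_t(\ell_m)$, then there exists $r\geq t$ such that $c_r(v)\geq c_r(\ell_m)$. 4. If $c_t(v)<c_t(\ell_m)$ and $c_{t+1}(v)>c_{t+1}(\ell_M)$, then $c_t$ has property plus. 5. If $d_t=0$, then there exists $r\geq t$ such that $c_r$ has property plus.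
   Context: Diffusion process: for a vertex $u$, $\Delta_t^-(u)=|\{w\in N(u): c_t(u)>c_t(w)\}|$, $\Delta_t^+(u)=|\{w\in N(u): c_t(u)<c_t(w)\}|$, $\Delta_t(u)=\Delta_t^+(u)-\Delta_t^-(u)$, and $c_{t+1}(u)=c_t(u)+\Delta_t(u)$ for all $u$ simultaneously. A configuration $c_i$ has property plus if (1) $c_i(x)+\Delta_i(x)>c_i(y)+\Delta_i(y)$ for every edge $xy$ with $c_i(x)<c_i(y)$, and (2) $c_i(x)+\Delta_i(x)=c_i(y)+\Delta_i(y)$ for every edge $xy$ with $c_i(x)=c_i(y)$. *)

theory Defs
  imports Main
begin

definition delta_minus :: "('a \<Rightarrow> 'a set) \<Rightarrow> ('a \<Rightarrow> int) \<Rightarrow> 'a \<Rightarrow> nat" where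
  "delta_minus N c u = card {w \<in> N u. c u > c w}"

definition delta_plus :: "('a \<Rightarrow> 'a set) \<Rightarrow> ('a \<Rightarrow> int) \<Rightarrow> 'a \<Rightarrow> nat" where
  "delta_plus N c u = card {w \<in> N u. c u < c w}"

definition delta :: "('a \<Rightarrow> 'a set) \<Rightarrow> ('a \<Rightarrow> int) \<Rightarrow> 'a \<Rightarrow> int" where
  "delta N c u = int (delta_plus N c u) - int (delta_minus N c u)"

definition diffusion_step :: "('a \<Rightarrow> 'a set) \<Rightarrow> ('a \<Rightarrow> int) \<Rightarrow> ('a \<Rightarrow> int)" where
  "diffusion_step N c = (\<lambda>u. c u + delta N c u)"

definition conf :: "('a \<Rightarrow> 'a set) \<Rightarrow> ('a \<Rightarrow> int) \<Rightarrow> nat \<Rightarrow> ('a \<Rightarrow> int)" where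
  "conf N c0 t = (diffusion_step N ^^ t) c0"

definition property_plus :: "('a \<Rightarrow> 'a set) \<Rightarrow> ('a \<Rightarrow> int) \<Rightarrow> bool" where
  "property_plus N c \<longleftrightarrow>
     (\<forall>x y. y \<in> N x \<longrightarrow> c x < c y \<longrightarrow> c x + delta N c x > c y + delta N c y) \<and>
     (\<forall>x y. y \<in> N x \<longrightarrow> c x = c y \<longrightarrow> c x + delta N c x = c y + delta N c y)"

text \<open>The star S_n = K_{1,n-1} on vertex set {0..<n}, centre 0, leaves {1..<n}.\<close>
definition star :: "nat \<Rightarrow> nat \<Rightarrow> nat set" where
  "star n u = (if u = 0 then {1..<n} else if u < n then {0} else {})"

definition leaf_spread :: "nat \<Rightarrow> (nat \<Rightarrow> int) \<Rightarrow> int" where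
  "leaf_spread n c = Max {\<bar>c x - c y\<bar> | x y. x \<in> {1..<n} \<and> y \<in> {1..<n}}"

end

theory Submission imports Defs begin
lemma conf_Suc: "conf N c0 (Suc t) = diffusion_step N (conf N c0 t)"
  by (simp add: conf_def)
lemma step_leaf:
  assumes "x \<in> {1..<n}"
  shows "diffusion_step (star n) c x = c x + (if c x < c 0 then 1 else if c 0 < c x then -1 else 0)"
proof -
  have s: "star n x = {0}" using assms by (simp add: star_def)
  have a: "{w \<in> star n x. c x < c w} = (if c x < c 0 then {0} else {})" unfolding s by auto
  have b: "{w \<in> star n x. c x > c w} = (if c 0 < c x then {0} else {})" unfolding s by auto
  show ?thesis
    unfolding diffusion_step_def delta_def delta_plus_def delta_minus_def a b by auto
qed
lemma step_centre_up:
  assumes "\<forall>w\<in>{1..<n}. c 0 < c w"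
  shows "diffusion_step (star n) c 0 = c 0 + int (n - 1)"
proof -
  have a: "{w \<in> star n 0. c 0 < c w} = {1..<n}" using assms by (auto simp: star_def)
  have b: "{w \<in> star n 0. c 0 > c w} = {}"
  proof (rule ccontr)
    assume "{w \<in> star n 0. c 0 > c w} \<noteq> {}"
    then obtain w where "w \<in> {1..<n}" "c 0 > c w" by (auto simp: star_def split: if_splits)
    then show False using assms by fastforce
  qed
  show ?thesis unfolding diffusion_step_def delta_def delta_plus_def delta_minus_def a b by simp
qed

lemma step_centre_down:
  assumes "\<forall>w\<in>{1..<n}. c w < c 0"
  shows "diffusion_step (star n) c 0 = c 0 - int (n - 1)"
proof -
  have a: "{w \<in> star n 0. c 0 > c w} = {1..<n}" using assms by (auto simp: star_def)
  have b: "{w \<in> star n 0. c 0 < c w} = {}"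
  proof (rule ccontr)
    assume "{w \<in> star n 0. c 0 < c w} \<noteq> {}"
    then obtain w where "w \<in> {1..<n}" "c 0 < c w" by (auto simp: star_def split: if_splits)
    then show False using assms by fastforce
  qed
  show ?thesis unfolding diffusion_step_def delta_def delta_plus_def delta_minus_def a b by simp
qed

lemma step_centre_eq:
  assumes "\<forall>w\<in>{1..<n}. c w = c 0"
  shows "diffusion_step (star n) c 0 = c 0"
proof -
  have a: "{w \<in> star n 0. c 0 > c w} = {}" using assms by (auto simp: star_def)
  have b: "{w \<in> star n 0. c 0 < c w} = {}"
  proof (rule ccontr)
    assume "{w \<in> star n 0. c 0 < c w} \<noteq> {}"
    then obtain w where "w \<in> {1..<n}" "c 0 < c w" by (auto simp: star_def split: if_splits)
    then show False using assms by fastforce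
  qed
  show ?thesis unfolding diffusion_step_def delta_def delta_plus_def delta_minus_def a b by simp
qed

lemma spread:
  assumes "lM \<in> {1..<n}" "lm \<in> {1..<n}" "\<forall>x\<in>{1..<n}. c lm \<le> c x \<and> c x \<le> c lM"
  shows "leaf_spread n c = c lM - c lm"
proof -
  let ?S = "{\<bar>c x - c y\<bar> | x y. x \<in> {1..<n} \<and> y \<in> {1..<n}}"
  have f: "finite ?S"
  proof (rule finite_subset)
    show "?S \<subseteq> (\<lambda>(x,y). \<bar>c x - c y\<bar>) ` ({1..<n} \<times> {1..<n})" by auto
  qed simp
  have "Max ?S = c lM - c lm"
  proof (rule Max_eqI[OF f])
    fix z assume "z \<in> ?S"
    then obtain x y where z: "z = \<bar>c x - c y\<bar>" and xy: "x \<in> {1..<n}" "y \<in> {1..<n}" by blast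
    have "c lm \<le> c x" "c x \<le> c lM" "c lm \<le> c y" "c y \<le> c lM" using assms(3) xy by auto
    then show "z \<le> c lM - c lm" unfolding z by linarith
  next
    have "c lM - c lm = \<bar>c lM - c lm\<bar>" using assms by auto
    then show "c lM - c lm \<in> ?S" using assms(1,2) by blast
  qed
  then show ?thesis by (simp add: leaf_spread_def)
qed

lemma pp_of:
  "property_plus N c \<longleftrightarrow>
     (\<forall>x y. y \<in> N x \<longrightarrow> c x < c y \<longrightarrow> diffusion_step N c x > diffusion_step N c y) \<and>
     (\<forall>x y. y \<in> N x \<longrightarrow> c x = c y \<longrightarrow> diffusion_step N c x = diffusion_step N c y)"
  by (simp add: property_plus_def diffusion_step_def)

lemma star_nb: "y \<in> star n x \<longleftrightarrow> (x = 0 \<and> y \<in> {1..<n}) \<or> (y = 0 \<and> x \<in> {1..<n})"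
  by (auto simp: star_def)

lemma ppA:
  assumes a: "\<forall>w\<in>{1..<n}. c 0 < c w"
    and b: "\<forall>w\<in>{1..<n}. diffusion_step (star n) c w < diffusion_step (star n) c 0"
  shows "property_plus (star n) c"
  unfolding pp_of
proof (intro conjI allI impI)
  fix x y assume y: "y \<in> star n x" and lt: "c x < c y"
  then have "(x = 0 \<and> y \<in> {1..<n}) \<or> (y = 0 \<and> x \<in> {1..<n})" by (simp add: star_nb)
  then show "diffusion_step (star n) c x > diffusion_step (star n) c y"
  proof
    assume "x = 0 \<and> y \<in> {1..<n}" then show ?thesis using b by simp
  next
    assume h: "y = 0 \<and> x \<in> {1..<n}"
    then have "c 0 < c x" using a by simp
    then show ?thesis using h lt by simp
  qed
next
  fix x y assume y: "y \<in> star n x" and eq: "c x = c y"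
  then have "(x = 0 \<and> y \<in> {1..<n}) \<or> (y = 0 \<and> x \<in> {1..<n})" by (simp add: star_nb)
  then show "diffusion_step (star n) c x = diffusion_step (star n) c y"
  proof
    assume h: "x = 0 \<and> y \<in> {1..<n}" then have "c 0 < c y" using a by simp
    then show ?thesis using h eq by simp
  next
    assume h: "y = 0 \<and> x \<in> {1..<n}"
    then have "c 0 < c x" using a by simp
    then show ?thesis using h eq by simp
  qed
qed

lemma ppB:
  assumes a: "\<forall>w\<in>{1..<n}. c w < c 0"
    and b: "\<forall>w\<in>{1..<n}. diffusion_step (star n) c w > diffusion_step (star n) c 0"
  shows "property_plus (star n) c"
  unfolding pp_of
proof (intro conjI allI impI)
  fix x y assume y: "y \<in> star n x" and lt: "c x < c y"
  then have "(x = 0 \<and> y \<in> {1..<n}) \<or> (y = 0 \<and> x \<in> {1..<n})" by (simp add: star_nb)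
  then show "diffusion_step (star n) c x > diffusion_step (star n) c y"
  proof
    assume h: "x = 0 \<and> y \<in> {1..<n}"
    then have "c y < c 0" using a by simp
    then show ?thesis using h lt by simp
  next
    assume "y = 0 \<and> x \<in> {1..<n}" then show ?thesis using b by simp
  qed
next
  fix x y assume y: "y \<in> star n x" and eq: "c x = c y"
  then have "(x = 0 \<and> y \<in> {1..<n}) \<or> (y = 0 \<and> x \<in> {1..<n})" by (simp add: star_nb)
  then show "diffusion_step (star n) c x = diffusion_step (star n) c y"
  proof
    assume h: "x = 0 \<and> y \<in> {1..<n}" then have "c y < c 0" using a by simp
    then show ?thesis using h eq by simp
  next
    assume h: "y = 0 \<and> x \<in> {1..<n}"
    then have "c x < c 0" using a by simp
    then show ?thesis using h eq by simp
  qed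
qed

lemma ppC:
  assumes a: "\<forall>w\<in>{1..<n}. c w = c 0"
  shows "property_plus (star n) c"
proof -
  have l: "\<forall>w\<in>{1..<n}. diffusion_step (star n) c w = c w"
    using a step_leaf by simp
  have z: "diffusion_step (star n) c 0 = c 0" using step_centre_eq a by blast
  show ?thesis unfolding pp_of
  proof (intro conjI allI impI)
    fix x y assume y: "y \<in> star n x" and lt: "c x < c y"
    then have "(x = 0 \<and> y \<in> {1..<n}) \<or> (y = 0 \<and> x \<in> {1..<n})" by (simp add: star_nb)
    then show "diffusion_step (star n) c x > diffusion_step (star n) c y" using a lt by auto
  next
    fix x y assume y: "y \<in> star n x" and eq: "c x = c y"
    then have "(x = 0 \<and> y \<in> {1..<n}) \<or> (y = 0 \<and> x \<in> {1..<n})" by (simp add: star_nb)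
    then show "diffusion_step (star n) c x = diffusion_step (star n) c y" using l z eq by auto
  qed
qed


theorem lemma18:
  fixes n :: nat and c0 :: "nat \<Rightarrow> int" and lM lm :: nat
  assumes "n \<ge> 3"
    and "lM \<in> {1..<n}" and "lm \<in> {1..<n}"
    and "\<forall>x\<in>{1..<n}. c0 x \<le> c0 lM"
    and "\<forall>x\<in>{1..<n}. c0 lm \<le> c0 x"
  shows "(\<forall>t. leaf_spread n (conf (star n) c0 t) = conf (star n) c0 t lM - conf (star n) c0 t lm)
    \<and> (\<forall>t. conf (star n) c0 t lm \<le> conf (star n) c0 t 0 \<and> conf (star n) c0 t 0 \<le> conf (star n) c0 t lM
           \<and> (conf (star n) c0 t lm < conf (star n) c0 t 0 \<or> conf (star n) c0 t 0 < conf (star n) c0 t lM)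
           \<longrightarrow> leaf_spread n (conf (star n) c0 (Suc t)) < leaf_spread n (conf (star n) c0 t))
    \<and> (\<forall>t. conf (star n) c0 t 0 < conf (star n) c0 t lm
           \<longrightarrow> (\<exists>r\<ge>t. conf (star n) c0 r 0 \<ge> conf (star n) c0 r lm))
    \<and> (\<forall>t. conf (star n) c0 t 0 < conf (star n) c0 t lm
           \<and> conf (star n) c0 (Suc t) 0 > conf (star n) c0 (Suc t) lM
           \<longrightarrow> property_plus (star n) (conf (star n) c0 t))
    \<and> (\<forall>t. leaf_spread n (conf (star n) c0 t) = 0
           \<longrightarrow> (\<exists>r\<ge>t. property_plus (star n) (conf (star n) c0 r)))"
proof -
  define C where "C = conf (star n) c0"
  define L where "L = {1..<(n::nat)}"
  have lmL: "lm \<in> L" and lML: "lM \<in> L" using assms L_def by auto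
  have CS: "\<And>t. C (Suc t) = diffusion_step (star n) (C t)" by (simp add: C_def conf_Suc)
  have leafS: "\<And>t x. x \<in> L \<Longrightarrow> C (Suc t) x = C t x + (if C t x < C t 0 then 1 else if C t 0 < C t x then -1 else 0)"
    using step_leaf CS L_def by simp
  have C0: "C 0 = c0" by (simp add: C_def conf_def)
  have inv: "\<forall>x\<in>L. C t lm \<le> C t x \<and> C t x \<le> C t lM" for t
  proof (induction t)
    case 0 then show ?case using assms C0 L_def by simp
  next
    case (Suc t)
    show ?case
    proof
      fix x assume x: "x \<in> L"
      have "C t lm \<le> C t x \<and> C t x \<le> C t lM" using Suc x by blast
      then show "C (Suc t) lm \<le> C (Suc t) x \<and> C (Suc t) x \<le> C (Suc t) lM"
        unfolding leafS[OF x] leafS[OF lmL] leafS[OF lML] by (auto split: if_split)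
    qed
  qed
  have P1: "leaf_spread n (C t) = C t lM - C t lm" for t
    using spread[of lM n lm "C t"] inv[of t] lmL lML L_def by simp
  have P2: "C t lm \<le> C t 0 \<and> C t 0 \<le> C t lM \<and> (C t lm < C t 0 \<or> C t 0 < C t lM)
      \<longrightarrow> leaf_spread n (C (Suc t)) < leaf_spread n (C t)" for t
    unfolding P1 leafS[OF lmL] leafS[OF lML] by auto
  have up: "C (Suc t) 0 = C t 0 + int (n - 1)" if "C t 0 < C t lm" for t
  proof -
    have "\<forall>w\<in>{1..<n}. C t 0 < C t w" using inv[of t] that L_def by force
    then show ?thesis using CS step_centre_up by metis
  qed
  have P3: "\<forall>t. C t lm - C t 0 < int k \<longrightarrow> (\<exists>r\<ge>t. C r 0 \<ge> C r lm)" for k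
  proof (induction k)
    case 0 then show ?case by force
  next
    case (Suc k)
    show ?case
    proof (intro allI impI)
      fix t assume h: "C t lm - C t 0 < int (Suc k)"
      show "\<exists>r\<ge>t. C r 0 \<ge> C r lm"
      proof (cases "C t 0 < C t lm")
        case True
        have "C (Suc t) lm - C (Suc t) 0 < int k"
          using up[OF True] leafS[OF lmL, of t] True h assms(1) by auto
        then obtain r where "r \<ge> Suc t" "C r 0 \<ge> C r lm" using Suc.IH by blast
        then show ?thesis by (intro exI[of _ r]) auto
      next
        case False then show ?thesis by force
      qed
    qed
  qed
  have P3': "C t 0 < C t lm \<longrightarrow> (\<exists>r\<ge>t. C r 0 \<ge> C r lm)" for t
    using P3[of "nat (C t lm - C t 0) + 1"] by force
  have P4: "C t 0 < C t lm \<and> C (Suc t) 0 > C (Suc t) lM \<longrightarrow> property_plus (star n) (C t)" for t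
  proof
    assume h: "C t 0 < C t lm \<and> C (Suc t) 0 > C (Suc t) lM"
    have a: "\<forall>w\<in>{1..<n}. C t 0 < C t w" using inv[of t] h L_def by force
    have b: "\<forall>w\<in>{1..<n}. diffusion_step (star n) (C t) w < diffusion_step (star n) (C t) 0"
      using inv[of "Suc t"] h L_def CS by force
    show "property_plus (star n) (C t)" using ppA[OF a b] .
  qed
  define E where "E t = (\<forall>x\<in>L. C t x = C t lm)" for t
  have Epres: "E t \<Longrightarrow> E (Suc t)" for t
    unfolding E_def
  proof
    fix x assume e: "\<forall>x\<in>L. C t x = C t lm" and x: "x \<in> L"
    have "C t x = C t lm" using e x by blast
    then show "C (Suc t) x = C (Suc t) lm" unfolding leafS[OF x] leafS[OF lmL] by simp
  qed
  have P5: "\<forall>t. E t \<longrightarrow> \<bar>C t lm - C t 0\<bar> < int n + int k \<longrightarrow> (\<exists>r\<ge>t. property_plus (star n) (C r))" for k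
  proof (induction k)
    case 0
    show ?case
    proof (intro allI impI)
      fix t assume e: "E t" and g: "\<bar>C t lm - C t 0\<bar> < int n + int 0"
      have ee: "\<forall>w\<in>{1..<n}. C t w = C t lm" using e E_def L_def by auto
      consider "C t 0 < C t lm" | "C t lm < C t 0" | "C t lm = C t 0" by linarith
      then have "property_plus (star n) (C t)"
      proof cases
        case 1
        have a: "\<forall>w\<in>{1..<n}. C t 0 < C t w" using ee 1 by auto
        have u: "diffusion_step (star n) (C t) 0 = C t 0 + int (n - 1)" using step_centre_up[OF a] .
        have "\<forall>w\<in>{1..<n}. diffusion_step (star n) (C t) w < diffusion_step (star n) (C t) 0"
          using u step_leaf ee 1 g assms(1) by auto
        then show ?thesis using ppA[OF a] by blast
      next
        case 2
        have a: "\<forall>w\<in>{1..<n}. C t w < C t 0" using ee 2 by auto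
        have u: "diffusion_step (star n) (C t) 0 = C t 0 - int (n - 1)" using step_centre_down[OF a] .
        have "\<forall>w\<in>{1..<n}. diffusion_step (star n) (C t) w > diffusion_step (star n) (C t) 0"
          using u step_leaf ee 2 g assms(1) by auto
        then show ?thesis using ppB[OF a] by blast
      next
        case 3
        have a: "\<forall>w\<in>{1..<n}. C t w = C t 0" using ee 3 by auto
        show ?thesis using ppC[OF a] .
      qed
      then show "\<exists>r\<ge>t. property_plus (star n) (C r)" by blast
    qed
  next
    case (Suc k)
    show ?case
    proof (intro allI impI)
      fix t assume e: "E t" and g: "\<bar>C t lm - C t 0\<bar> < int n + int (Suc k)"
      have ee: "\<forall>w\<in>{1..<n}. C t w = C t lm" using e E_def L_def by auto
      show "\<exists>r\<ge>t. property_plus (star n) (C r)"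
      proof (cases "\<bar>C t lm - C t 0\<bar> < int n + int k")
        case True then show ?thesis using Suc.IH e by blast
      next
        case False
        then have big: "\<bar>C t lm - C t 0\<bar> \<ge> int n" by linarith
        have "\<bar>C (Suc t) lm - C (Suc t) 0\<bar> < int n + int k"
        proof (cases "C t 0 < C t lm")
          case True
          have a: "\<forall>w\<in>{1..<n}. C t 0 < C t w" using ee True by auto
          have "C (Suc t) 0 = C t 0 + int (n - 1)" using step_centre_up[OF a] CS by simp
          then show ?thesis using leafS[OF lmL, of t] True g big assms(1) by auto
        next
          case False
          then have F: "C t lm < C t 0" using big assms(1) by auto
          have a: "\<forall>w\<in>{1..<n}. C t w < C t 0" using ee F by auto
          have "C (Suc t) 0 = C t 0 - int (n - 1)" using step_centre_down[OF a] CS by simp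
          then show ?thesis using leafS[OF lmL, of t] F g big assms(1) by auto
        qed
        then obtain r where "r \<ge> Suc t" "property_plus (star n) (C r)"
          using Suc.IH Epres[OF e] by blast
        then show ?thesis by (intro exI[of _ r]) auto
      qed
    qed
  qed
  have P5': "leaf_spread n (C t) = 0 \<longrightarrow> (\<exists>r\<ge>t. property_plus (star n) (C r))" for t
  proof
    assume "leaf_spread n (C t) = 0"
    then have "C t lM = C t lm" using P1 by simp
    then have "E t" using inv[of t] E_def by force
    show "\<exists>r\<ge>t. property_plus (star n) (C r)"
    proof -
      have "\<bar>C t lm - C t 0\<bar> < int n + int (nat \<bar>C t lm - C t 0\<bar>)" using assms(1) by simp
      then show ?thesis using P5[of "nat \<bar>C t lm - C t 0\<bar>"] \<open>E t\<close> by blast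
    qed
  qed
  show ?thesis using P1 P2 P3' P4 P5' unfolding C_def by blast
qed

end
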